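(* Let $U\subset\mathcal Y$ be open and let $w:U\to\mathbb R$ be continuous and locally bounded. Assume: (H1) $\mathcal Y$ is reflexive; (H2) there exists $M:\mathcal Y\times\mathcal Y\to[0,\infty]$ such that $y_1\mapsto M(y_1,y_2)$ is Fréchet differentiable at every $y_1\neq y_2$ and $y_2\mapsto M(y_1,y_2)$ is Fréchet differentiable at every $y_2\ne y_1$, and there are constants $\lambda\in(0,1]$, $\Lambda\in[1,\infty)$ with $\lambda\|y_1-y_2\|\le M(y_1,y_2)\le\Lambda\|y_1-y_2\|$ for all $y_1,y_2\in\mathcal Y$, and $\lambda\le\|\nabla M(\cdot,y_2)(y_1)\|_{\mathcal Y^*}$ and $\|\nabla M(y_1,\cdot)(y_2)\|_{\mathcal Y^*}\le\Lambda$ whenever these derivatives are defined; (i) for every $x\in X$, every $u\in U$ and every unit $d\in\mathcal Y$ the directional derivative $D_df_x(u)$ exists, and there is a constant $C_0>0$ such that $\inf_{x\in S(u)}D_df_x(u)>-C_0$ for all $u\in U$ and all unit $d$; (ii) for every unit $d\in\mathcal Y$, $w$ is a viscosity subsolution in $U$ of $-\langle\nabla w(u),d\rangle+\inf_{x\in S(u)}D_df_x(u)=0$. Then $w$ is locally Lipschitz in $U$.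
   Context: Let $\mathfrak X,\mathcal Y$ be real Banach spaces, $X\subset\mathfrak X$ and $U\subset\mathcal Y$ nonempty, $f:X\times U\to\mathbb R$ continuous, and $\Phi:U\to2^X$ a set-valued map. The optimal value function is $v(u)=\inf_{x\in\Phi(u)}f(x,u)$ and the optimal set map is $S(u)=\{x\in\Phi(u):f(x,u)=v(u)\}$. For $x\in X$, $f_x(u):=f(x,u)$, and $D_df_x(u)=\lim_{s\downarrow0}\frac{f(x,u+sd)-f(x,u)}{s}$ is the directional derivative. A unit vector is one of norm $1$; the infimum over the empty set is $+\infty$. For $w:U\to\mathbb R$ ($U$ open) and $u_0\in U$: $\mathcal J^+w(u_0)=\{p\in\mathcal Y^*:\limsup_{u\to u_0}\frac{w(u)-w(u_0)-\langle p,u-u_0\rangle}{\|u-u_0\|}\le0\}$ and $\mathcal J^-w(u_0)=\{p\in\mathcal Y^*:\liminf_{u\to u_0}\frac{w(u)-w(u_0)-\langle p,u-u_0\rangle}{\|u-u_0\|}\ge0\}$. For a fixed unit $d$, an upper semicontinuous $w$ is a viscosity subsolution of $-\langle\nabla w(u),d\rangle+\inf_{x\in S(u)}D_df_x(u)=0$ at $u_0$ if $-\langle\eta,d\rangle+\inf_{x\in S(u_0)}D_df_x(u_0)\le0$ for every $\eta\in\mathcal J^+w(u_0)$; a lower semicontinuous $w$ is a viscosity supersolution at $u_0$ if $-\langle\eta,d\rangle+\inf_{x\in S(u_0)}D_df_x(u_0)\ge0$ for every $\eta\in\mathcal J^-w(u_0)$; a viscosity solution is both; "in a set" means at every point of it.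 *)

theory Defs
  imports "HOL-Analysis.Analysis"
begin

text \<open>Optimal value function v(u) = inf over Phi(u) of f(x,u); inf of empty set is +infinity.\<close>
definition optval :: "('x \<Rightarrow> 'y \<Rightarrow> real) \<Rightarrow> ('y \<Rightarrow> 'x set) \<Rightarrow> 'y \<Rightarrow> ereal" where
  "optval f Phi u = (INF x\<in>Phi u. ereal (f x u))"

definition optset :: "('x \<Rightarrow> 'y \<Rightarrow> real) \<Rightarrow> ('y \<Rightarrow> 'x set) \<Rightarrow> 'y \<Rightarrow> 'x set" where
  "optset f Phi u = {x \<in> Phi u. ereal (f x u) = optval f Phi u}"

definition dir_deriv_exists :: "('x \<Rightarrow> 'y::real_normed_vector \<Rightarrow> real) \<Rightarrow> 'x \<Rightarrow> 'y \<Rightarrow> 'y \<Rightarrow> bool" where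
  "dir_deriv_exists f x u d \<longleftrightarrow>
     (\<exists>L. ((\<lambda>s. (f x (u + s *\<^sub>R d) - f x u) / s) \<longlongrightarrow> L) (at_right 0))"

definition dir_deriv :: "('x \<Rightarrow> 'y::real_normed_vector \<Rightarrow> real) \<Rightarrow> 'x \<Rightarrow> 'y \<Rightarrow> 'y \<Rightarrow> real" where
  "dir_deriv f x u d = Lim (at_right 0) (\<lambda>s. (f x (u + s *\<^sub>R d) - f x u) / s)"

definition reflexive_space :: "'y::real_normed_vector itself \<Rightarrow> bool" where
  "reflexive_space TYPE('y) \<longleftrightarrow>
     (\<forall>\<phi> :: ('y \<Rightarrow>\<^sub>L real) \<Rightarrow>\<^sub>L real. \<exists>y::'y. \<forall>p. blinfun_apply \<phi> p = blinfun_apply p y)"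

definition superjet :: "('y::real_normed_vector \<Rightarrow> real) \<Rightarrow> 'y \<Rightarrow> ('y \<Rightarrow>\<^sub>L real) set" where
  "superjet w u0 = {p. Limsup (at u0)
      (\<lambda>u. ereal ((w u - w u0 - blinfun_apply p (u - u0)) / norm (u - u0))) \<le> 0}"

definition subjet :: "('y::real_normed_vector \<Rightarrow> real) \<Rightarrow> 'y \<Rightarrow> ('y \<Rightarrow>\<^sub>L real) set" where
  "subjet w u0 = {p. Liminf (at u0)
      (\<lambda>u. ereal ((w u - w u0 - blinfun_apply p (u - u0)) / norm (u - u0))) \<ge> 0}"

definition visc_subsol_at ::
  "('x \<Rightarrow> 'y::real_normed_vector \<Rightarrow> real) \<Rightarrow> ('y \<Rightarrow> 'x set) \<Rightarrow> 'y \<Rightarrow> ('y \<Rightarrow> real) \<Rightarrow> 'y \<Rightarrow> bool" where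
  "visc_subsol_at f Phi d w u0 \<longleftrightarrow>
     (\<forall>\<epsilon>>0. \<forall>\<^sub>F u in at u0. w u < w u0 + \<epsilon>) \<and>
     (\<forall>\<eta>\<in>superjet w u0.
        ereal (- blinfun_apply \<eta> d) + (INF x\<in>optset f Phi u0. ereal (dir_deriv f x u0 d)) \<le> 0)"

definition locally_bounded_on :: "'y::metric_space set \<Rightarrow> ('y \<Rightarrow> real) \<Rightarrow> bool" where
  "locally_bounded_on U w \<longleftrightarrow>
     (\<forall>u\<in>U. \<exists>r>0. \<exists>B. \<forall>y\<in>U \<inter> ball u r. \<bar>w y\<bar> \<le> B)"

definition locally_lipschitz_on :: "'y::metric_space set \<Rightarrow> ('y \<Rightarrow> real) \<Rightarrow> bool" where
  "locally_lipschitz_on U w \<longleftrightarrow>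
     (\<forall>u\<in>U. \<exists>r>0. \<exists>L. \<forall>y\<in>U \<inter> ball u r. \<forall>z\<in>U \<inter> ball u r. \<bar>w y - w z\<bar> \<le> L * dist y z)"

end

theory Submission
  imports Defs
begin

lemma seg_dist:
  fixes u v a :: "'a::real_normed_vector"
  assumes "a \<in> closed_segment u v"
  shows "norm (u - a) + norm (a - v) = norm (u - v)"
proof -
  obtain t where t: "a = (1 - t) *\<^sub>R u + t *\<^sub>R v" "0 \<le> t" "t \<le> 1"
    using assms by (auto simp: closed_segment_def)
  have "u - a = t *\<^sub>R (u - v)" using t by (simp add: algebra_simps)
  moreover have "a - v = (1 - t) *\<^sub>R (u - v)" using t by (simp add: algebra_simps)
  ultimately have "norm (u - a) = t * norm (u - v)" "norm (a - v) = (1 - t) * norm (u - v)"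
    using t by auto
  then show ?thesis by (simp add: algebra_simps)
qed

lemma lipM:
  fixes M :: "'y::real_normed_vector \<Rightarrow> 'y \<Rightarrow> real"
  assumes H2_diff2: "\<forall>y1 y2. y2 \<noteq> y1 \<longrightarrow> (\<lambda>y. M y1 y) differentiable (at y2)"
    and H2_bounds: "\<forall>y1 y2. lam * norm (y1 - y2) \<le> M y1 y2 \<and> M y1 y2 \<le> Lam * norm (y1 - y2)"
    and H2_grad2: "\<forall>y1 y2 D. ((\<lambda>y. M y1 y) has_derivative D) (at y2) \<longrightarrow> onorm D \<le> Lam"
    and lam: "0 < lam"
  shows "\<bar>M a u - M a v\<bar> \<le> Lam * norm (u - v)"
proof (cases "a \<in> closed_segment u v")
  case True
  have n: "0 \<le> M a u" "0 \<le> M a v"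
    using H2_bounds lam by (meson mult_nonneg_nonneg norm_ge_zero order_trans less_imp_le)+
  have "M a u \<le> Lam * norm (u - a)" "M a v \<le> Lam * norm (a - v)"
    using H2_bounds by (metis norm_minus_commute)+
  then have "\<bar>M a u - M a v\<bar> \<le> Lam * (norm (u - a) + norm (a - v))"
    using n by (simp add: algebra_simps)
  then show ?thesis using seg_dist[OF True] by simp
next
  case False
  define D where "D x = (SOME D. ((\<lambda>y. M a y) has_derivative D) (at x))" for x
  have d: "((\<lambda>y. M a y) has_derivative D x) (at x)" if "x \<in> closed_segment u v" for x
  proof -
    have "x \<noteq> a" using that False by auto
    then have "(\<lambda>y. M a y) differentiable (at x)" using H2_diff2 by auto
    then show ?thesis unfolding D_def differentiable_def by (rule someI_ex)
  qed
  have "norm (M a u - M a v) \<le> Lam * norm (u - v)"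
    apply (rule differentiable_bound[where S="closed_segment u v" and f'=D])
    using d H2_grad2 by (auto intro: has_derivative_at_withinI)
  then show ?thesis by simp
qed

lemma ereal_aux: "ereal (- c) < I \<Longrightarrow> ereal a + I \<le> 0 \<Longrightarrow> - c < - a"
  by (cases I) auto

lemma visc_bound:
  fixes f :: "'x \<Rightarrow> 'y::real_normed_vector \<Rightarrow> real"
  assumes i_bound: "\<forall>u\<in>U. \<forall>d. norm d = 1 \<longrightarrow>
                    (INF x\<in>optset f Phi u. ereal (dir_deriv f x u d)) > ereal (- C0)"
    and ii: "\<forall>d. norm d = 1 \<longrightarrow> (\<forall>u\<in>U. visc_subsol_at f Phi d w u)"
    and C0: "0 < C0" and u: "u \<in> U" and eta: "\<eta> \<in> superjet w u"
  shows "norm \<eta> \<le> C0"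
proof -
  have gt: "- C0 < blinfun_apply \<eta> d" if d: "norm d = 1" for d
  proof -
    define I where "I = (INF x\<in>optset f Phi u. ereal (dir_deriv f x u d))"
    have I1: "ereal (- C0) < I" using i_bound u d unfolding I_def by blast
    have I2: "ereal (- blinfun_apply \<eta> d) + I \<le> 0"
    proof -
      have "visc_subsol_at f Phi d w u" using ii d u by blast
      then show ?thesis using eta unfolding visc_subsol_at_def I_def by blast
    qed
    show ?thesis using ereal_aux[OF I1 I2] by simp
  qed
  have ab: "\<bar>blinfun_apply \<eta> d\<bar> \<le> C0" if d: "norm d = 1" for d
  proof -
    have "- C0 < blinfun_apply \<eta> (- d)" using gt[of "-d"] d by simp
    then have "blinfun_apply \<eta> d < C0" by (simp add: blinfun.minus_right)
    then show ?thesis using gt[OF d] by auto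
  qed
  show ?thesis
  proof (rule norm_blinfun_bound)
    show "0 \<le> C0" using C0 by simp
    fix x :: 'y
    show "norm (blinfun_apply \<eta> x) \<le> C0 * norm x"
    proof (cases "x = 0")
      case True then show ?thesis by simp
    next
      case False
      define d where "d = x /\<^sub>R norm x"
      have "norm d = 1" using False by (simp add: d_def)
      have e: "norm x *\<^sub>R d = x" using False unfolding d_def by simp
      have "blinfun_apply \<eta> x = norm x * blinfun_apply \<eta> d"
        by (metis e blinfun.scaleR_right real_scaleR_def)
      moreover have "\<bar>blinfun_apply \<eta> d\<bar> \<le> C0" using ab[OF \<open>norm d = 1\<close>] .
      ultimately show ?thesis
        by (simp add: abs_mult) (metis mult.commute mult_left_mono norm_ge_zero)
    qed
  qed
qed

lemma deriv_rem:
  assumes "(f has_derivative D) (at y)" "0 < e"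
  shows "\<forall>\<^sub>F u in at y. \<bar>f u - f y - D (u - y)\<bar> \<le> e * norm (u - y)"
proof -
  obtain d where d: "d > 0" "\<forall>u. norm (u - y) < d \<longrightarrow> norm (f u - f y - D (u - y)) \<le> e * norm (u - y)"
    using assms unfolding has_derivative_at_alt by blast
  show ?thesis unfolding eventually_at
    using d by (auto simp: dist_norm intro!: exI[of _ d])
qed

lemma superjet_intro:
  fixes w :: "'y::real_normed_vector \<Rightarrow> real"
  assumes "\<And>e. e > 0 \<Longrightarrow> \<forall>\<^sub>F u in at y. w u - w y - blinfun_apply q (u - y) \<le> e * norm (u - y)"
  shows "q \<in> superjet w y"
  unfolding superjet_def mem_Collect_eq Limsup_le_iff
proof (intro allI impI)
  fix c :: ereal assume c: "0 < c"
  show "\<forall>\<^sub>F u in at y. ereal ((w u - w y - blinfun_apply q (u - y)) / norm (u - y)) < c"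
  proof (cases c)
    case (real r)
    then have r: "r > 0" using c by simp
    have "\<forall>\<^sub>F u in at y. w u - w y - blinfun_apply q (u - y) \<le> (r/2) * norm (u - y)"
      using assms[of "r/2"] r by simp
    moreover have "\<forall>\<^sub>F u in at y. u \<noteq> y" by (simp add: eventually_at_filter)
    ultimately show ?thesis
    proof eventually_elim
      case (elim u)
      then have "norm (u - y) > 0" by simp
      then have "(w u - w y - blinfun_apply q (u - y)) / norm (u - y) \<le> r/2"
        using elim(1) by (simp add: divide_le_eq)
      then have "(w u - w y - blinfun_apply q (u - y)) / norm (u - y) < r" using r by linarith
      then show ?case using real by simp
    qed
  next
    case PInf then show ?thesis by simp
  next
    case MInf then show ?thesis using c by simp
  qed
qed

lemma geo_bound:
  fixes f :: "nat \<Rightarrow> real"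
  assumes "\<And>k. \<bar>f k\<bar> \<le> K * (1/2)^k"
  shows "summable f" "\<bar>suminf f\<bar> \<le> 2 * K"
proof -
  have sg: "summable (\<lambda>k. K * (1/2::real)^k)"
    by (intro summable_mult summable_geometric) simp
  have sg2: "(\<Sum>k. K * (1/2::real)^k) = 2 * K"
    using suminf_mult[OF summable_geometric[of "1/2::real"], of K] suminf_geometric[of "1/2::real"] by simp
  have sa: "summable (\<lambda>k. \<bar>f k\<bar>)"
    by (rule summable_comparison_test[OF _ sg]) (use assms in auto)
  then show "summable f" by (rule summable_rabs_cancel)
  have "\<bar>suminf f\<bar> \<le> (\<Sum>k. \<bar>f k\<bar>)" by (rule summable_rabs[OF sa])
  also have "\<dots> \<le> (\<Sum>k. K * (1/2::real)^k)" by (rule suminf_le[OF assms sa sg])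
  finally show "\<bar>suminf f\<bar> \<le> 2 * K" using sg2 by simp
qed

lemma smooth_sum:
  fixes m :: "'y::banach \<Rightarrow> 'y \<Rightarrow> real" and x :: "nat \<Rightarrow> 'y"
  assumes lip: "\<And>a u v. \<bar>m a u - m a v\<bar> \<le> Lam * norm (u - v)"
    and diff: "\<And>a u. u \<noteq> a \<Longrightarrow> \<exists>D. (m a has_derivative D) (at u) \<and> onorm D \<le> Lam"
    and m0: "\<And>a. m a a = 0" and nn: "\<And>a u. 0 \<le> m a u"
    and B: "\<And>k. m (x k) y \<le> B" and Lam: "0 \<le> Lam"
  shows "\<exists>p. norm p \<le> 4 * Lam * B \<and> (\<forall>e>0. \<forall>\<^sub>F u in at y.
     (\<Sum>k. (1/2)^k * (m (x k) u)^2) - (\<Sum>k. (1/2)^k * (m (x k) y)^2) - blinfun_apply p (u - y)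
       \<le> e * norm (u - y))"
proof -
  define c :: "nat \<Rightarrow> real" where "c k = (1/2)^k" for k
  have B0: "0 \<le> B" using B[of 0] nn[of "x 0" y] by linarith
  define Df where "Df k = (SOME D. (m (x k) has_derivative D) (at y) \<and> onorm D \<le> Lam)" for k
  have hD: "(m (x k) has_derivative Df k) (at y) \<and> onorm (Df k) \<le> Lam" if "x k \<noteq> y" for k
  proof -
    have "y \<noteq> x k" using that by simp
    from diff[OF this] show ?thesis unfolding Df_def by (rule someI_ex)
  qed
  define Db where "Db k = (if x k = y then 0 else Blinfun (Df k))" for k
  have Dbapp: "blinfun_apply (Db k) = Df k" if "x k \<noteq> y" for k
  proof -
    have "bounded_linear (Df k)" using hD[OF that] has_derivative_bounded_linear by blast
    then show ?thesis using that by (simp add: Db_def bounded_linear_Blinfun_apply)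
  qed
  have nDb: "norm (Db k) \<le> Lam" for k
  proof (cases "x k = y")
    case True then show ?thesis using Lam by (simp add: Db_def)
  next
    case False then show ?thesis using hD[OF False] Dbapp[OF False] by (simp add: norm_blinfun.rep_eq)
  qed
  define a where "a k = c k * 2 * m (x k) y" for k
  have a0: "a k = 0" if "x k = y" for k using that m0 by (simp add: a_def)
  have aB: "0 \<le> a k" "a k \<le> 2 * B * (1/2)^k" for k
    using nn[of "x k" y] B[of k] by (auto simp: a_def c_def mult_left_mono)
  have nterm: "norm (a k *\<^sub>R Db k) \<le> (2 * B * Lam) * (1/2)^k" for k
  proof -
    have "norm (a k *\<^sub>R Db k) = a k * norm (Db k)" using aB by simp
    also have "\<dots> \<le> (2 * B * (1/2)^k) * Lam" using aB nDb[of k] Lam B0 by (intro mult_mono) auto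
    finally show ?thesis by (simp add: algebra_simps)
  qed
  have sg: "summable (\<lambda>k. (2 * B * Lam) * (1/2::real)^k)"
    by (intro summable_mult summable_geometric) simp
  have sp: "summable (\<lambda>k. a k *\<^sub>R Db k)"
    by (rule summable_comparison_test[OF _ sg]) (use nterm in auto)
  have snp: "summable (\<lambda>k. norm (a k *\<^sub>R Db k))"
    by (rule summable_comparison_test[OF _ sg]) (use nterm in auto)
  define p where "p = (\<Sum>k. a k *\<^sub>R Db k)"
  have "norm p \<le> (\<Sum>k. norm (a k *\<^sub>R Db k))" unfolding p_def by (rule summable_norm[OF snp])
  also have "\<dots> \<le> (\<Sum>k. (2 * B * Lam) * (1/2::real)^k)" by (rule suminf_le[OF nterm snp sg])
  also have "\<dots> = 4 * Lam * B"
    using suminf_mult[OF summable_geometric[of "1/2::real"], of "2*B*Lam"] suminf_geometric[of "1/2::real"] by simp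
  finally have np: "norm p \<le> 4 * Lam * B" .
  have papp: "blinfun_apply p v = (\<Sum>k. a k * blinfun_apply (Db k) v)" for v
  proof -
    have "bounded_linear (\<lambda>q. blinfun_apply q v)" by (rule blinfun.bounded_linear_left)
    from bounded_linear.suminf[OF this sp] show ?thesis unfolding p_def by (simp add: blinfun.scaleR_left)
  qed
  define r where "r k u = m (x k) u - m (x k) y - blinfun_apply (Db k) (u - y)" for k u
  have rb: "\<bar>r k u\<bar> \<le> 2 * Lam * norm (u - y)" for k u
  proof -
    have "\<bar>blinfun_apply (Db k) (u - y)\<bar> \<le> norm (Db k) * norm (u - y)"
      using norm_blinfun[of "Db k" "u - y"] by simp
    also have "\<dots> \<le> Lam * norm (u - y)" using nDb[of k] by (intro mult_right_mono) auto
    finally show ?thesis using lip[of "x k" u y] unfolding r_def by linarith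
  qed
  have main: "(\<Sum>k. c k * (m (x k) u)^2) - (\<Sum>k. c k * (m (x k) y)^2) - blinfun_apply p (u - y)
     \<le> 2 * (Lam^2 * norm (u - y)^2) + \<bar>\<Sum>k<N. a k * r k u\<bar> + 2 * ((2 * B * 2 * Lam * norm (u - y)) * (1/2)^N)"
    for u N
  proof -
    have bu: "\<bar>m (x k) u\<bar> \<le> B + Lam * norm (u - y)" for k
      using lip[of "x k" u y] B[of k] nn[of "x k" u] by linarith
    have s1: "summable (\<lambda>k. c k * (m (x k) u)^2)"
    proof (rule geo_bound(1))
      fix k
      have "(m (x k) u)^2 \<le> (B + Lam * norm (u - y))^2"
        using bu[of k] nn[of "x k" u] by (intro power_mono) auto
      then show "\<bar>c k * (m (x k) u)^2\<bar> \<le> (B + Lam * norm (u - y))^2 * (1/2)^k"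
        by (simp add: c_def mult.commute)
    qed
    have s2: "summable (\<lambda>k. c k * (m (x k) y)^2)"
    proof (rule geo_bound(1))
      fix k
      have "(m (x k) y)^2 \<le> B^2"
        using B[of k] nn[of "x k" y] by (intro power_mono) auto
      then show "\<bar>c k * (m (x k) y)^2\<bar> \<le> B^2 * (1/2)^k"
        by (simp add: c_def mult.commute)
    qed
    have s3: "summable (\<lambda>k. a k * blinfun_apply (Db k) (u - y))"
    proof -
      have "bounded_linear (\<lambda>q. blinfun_apply q (u - y))" by (rule blinfun.bounded_linear_left)
      from bounded_linear.summable[OF this sp] show ?thesis by (simp add: blinfun.scaleR_left)
    qed
    have q1: "\<bar>c k * (m (x k) u - m (x k) y)^2\<bar> \<le> (Lam^2 * norm (u - y)^2) * (1/2)^k" for k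
    proof -
      have "\<bar>m (x k) u - m (x k) y\<bar>^2 \<le> (Lam * norm (u - y))^2"
        using lip[of "x k" u y] by (intro power_mono) auto
      then show ?thesis by (simp add: c_def power_mult_distrib mult.commute)
    qed
    have q2: "\<bar>a k * r k u\<bar> \<le> (2 * B * 2 * Lam * norm (u - y)) * (1/2)^k" for k
    proof -
      have "\<bar>a k * r k u\<bar> = a k * \<bar>r k u\<bar>" using aB(1)[of k] by (simp add: abs_mult)
      also have "\<dots> \<le> (2 * B * (1/2)^k) * (2 * Lam * norm (u - y))"
        using aB[of k] rb[of k u] by (intro mult_mono) auto
      finally show ?thesis by (simp add: algebra_simps)
    qed
    have t1: "summable (\<lambda>k. c k * (m (x k) u - m (x k) y)^2)" by (rule geo_bound(1)[OF q1])
    have b1: "\<bar>\<Sum>k. c k * (m (x k) u - m (x k) y)^2\<bar> \<le> 2 * (Lam^2 * norm (u - y)^2)"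
      by (rule geo_bound(2)[OF q1])
    have t2: "summable (\<lambda>k. a k * r k u)" by (rule geo_bound(1)[OF q2])
    have q3: "\<bar>a (k + N) * r (k + N) u\<bar> \<le> ((2 * B * 2 * Lam * norm (u - y)) * (1/2)^N) * (1/2)^k" for k
      using q2[of "k + N"] by (simp add: power_add algebra_simps)
    have b2: "\<bar>\<Sum>k. a (k + N) * r (k + N) u\<bar> \<le> 2 * ((2 * B * 2 * Lam * norm (u - y)) * (1/2)^N)"
      by (rule geo_bound(2)[OF q3])
    have split: "(\<Sum>k. a k * r k u) = (\<Sum>k. a (k + N) * r (k + N) u) + (\<Sum>k<N. a k * r k u)"
      by (rule suminf_split_initial_segment[OF t2])
    have eq: "(\<Sum>k. c k * (m (x k) u)^2) - (\<Sum>k. c k * (m (x k) y)^2) - blinfun_apply p (u - y)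
      = (\<Sum>k. c k * (m (x k) u - m (x k) y)^2) + (\<Sum>k. a k * r k u)"
    proof -
      have "(\<Sum>k. c k * (m (x k) u)^2) - (\<Sum>k. c k * (m (x k) y)^2) - blinfun_apply p (u - y)
        = (\<Sum>k. c k * (m (x k) u)^2 - c k * (m (x k) y)^2 - a k * blinfun_apply (Db k) (u - y))"
        unfolding papp suminf_diff[OF s1 s2] suminf_diff[OF summable_diff[OF s1 s2] s3] ..
      also have "\<dots> = (\<Sum>k. c k * (m (x k) u - m (x k) y)^2 + a k * r k u)"
        by (rule arg_cong[where f=suminf], rule ext) (simp add: a_def r_def power2_eq_square algebra_simps)
      also have "\<dots> = (\<Sum>k. c k * (m (x k) u - m (x k) y)^2) + (\<Sum>k. a k * r k u)"
        by (rule suminf_add[OF t1 t2, symmetric])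
      finally show ?thesis .
    qed
    show ?thesis unfolding eq split using b1 b2 by linarith
  qed
  show ?thesis
  proof (intro exI conjI allI impI)
    show "norm p \<le> 4 * Lam * B" by (rule np)
    fix e :: real assume e: "e > 0"
    have "0 \<le> B * Lam" using B0 Lam by simp
    then have "3 * (8 * B * Lam + 1) > 0" by simp
    then have epos: "e / (3 * (8 * B * Lam + 1)) > 0" using e by simp
    obtain N where N: "(1/2::real)^N < e / (3 * (8 * B * Lam + 1))"
      using real_arch_pow_inv[OF epos, of "1/2::real"] by auto
    have tailN: "2 * ((2 * B * 2 * Lam * t) * (1/2)^N) \<le> e / 3 * t" if "t \<ge> 0" for t
    proof -
      have "(8 * B * Lam) * (1/2::real)^N \<le> (8 * B * Lam + 1) * (e / (3 * (8 * B * Lam + 1)))"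
        using N B0 Lam by (intro mult_mono) auto
      also have "\<dots> = e / 3"
      proof -
        have nz: "8 * B * Lam + 1 \<noteq> 0" using \<open>0 \<le> B * Lam\<close> by simp
        show ?thesis using nz by (simp add: field_simps)
      qed
      finally have "(8 * B * Lam) * (1/2::real)^N \<le> e / 3" .
      then have "(8 * B * Lam) * (1/2::real)^N * t \<le> e / 3 * t" using that by (intro mult_right_mono) auto
      then show ?thesis by (simp add: algebra_simps)
    qed
    define e' where "e' = e / (3 * (4 * B + 1))"
    have e': "e' > 0" using e B0 by (simp add: e'_def)
    have ev1: "\<forall>\<^sub>F u in at y. \<forall>k\<in>{..<N}. \<bar>a k * r k u\<bar> \<le> a k * (e' * norm (u - y))"
    proof (rule eventually_ball_finite, simp, intro ballI)
      fix k assume "k \<in> {..<N}"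
      show "\<forall>\<^sub>F u in at y. \<bar>a k * r k u\<bar> \<le> a k * (e' * norm (u - y))"
      proof (cases "x k = y")
        case True then show ?thesis using a0 by simp
      next
        case False
        have "\<forall>\<^sub>F u in at y. \<bar>m (x k) u - m (x k) y - Df k (u - y)\<bar> \<le> e' * norm (u - y)"
          by (rule deriv_rem[OF conjunct1[OF hD[OF False]] e'])
        then show ?thesis
        proof eventually_elim
          case (elim u)
          then have "\<bar>r k u\<bar> \<le> e' * norm (u - y)" unfolding r_def Dbapp[OF False] .
          then show ?case using aB(1)[of k] by (simp add: abs_mult mult_left_mono)
        qed
      qed
    qed
    have ev2: "\<forall>\<^sub>F u in at y. 2 * (Lam^2 * norm (u - y)^2) \<le> e / 3 * norm (u - y)"
      unfolding eventually_at
    proof (intro exI conjI ballI impI)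
      have L2: "0 < 6 * Lam^2 + 1" using zero_le_power2[of Lam] by linarith
      show "e / (6 * Lam^2 + 1) > 0" using e L2 by simp
      fix u assume "u \<in> UNIV" and h: "u \<noteq> y \<and> dist u y < e / (6 * Lam^2 + 1)"
      then have nu: "norm (u - y) < e / (6 * Lam^2 + 1)" "0 \<le> norm (u - y)" by (auto simp: dist_norm)
      have "6 * Lam^2 * norm (u - y) \<le> (6 * Lam^2 + 1) * norm (u - y)" by (simp add: mult_right_mono)
      also have "\<dots> \<le> e" using nu L2 by (simp add: field_simps)
      finally have "6 * Lam^2 * norm (u - y) \<le> e" .
      then have "6 * Lam^2 * norm (u - y) * norm (u - y) \<le> e * norm (u - y)"
        using nu by (intro mult_right_mono) auto
      then show "2 * (Lam^2 * norm (u - y)^2) \<le> e / 3 * norm (u - y)"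
        by (simp add: power2_eq_square algebra_simps)
    qed
    from ev1 ev2 show "\<forall>\<^sub>F u in at y.
      (\<Sum>k. (1/2)^k * (m (x k) u)^2) - (\<Sum>k. (1/2)^k * (m (x k) y)^2) - blinfun_apply p (u - y)
       \<le> e * norm (u - y)"
    proof eventually_elim
      case (elim u)
      have h1: "\<bar>\<Sum>k<N. a k * r k u\<bar> \<le> (\<Sum>k<N. a k) * (e' * norm (u - y))"
      proof -
        have "\<bar>\<Sum>k<N. a k * r k u\<bar> \<le> (\<Sum>k<N. \<bar>a k * r k u\<bar>)" by (rule sum_abs)
        also have "\<dots> \<le> (\<Sum>k<N. a k * (e' * norm (u - y)))" using elim(1) by (intro sum_mono) auto
        finally show ?thesis by (simp add: sum_distrib_right)
      qed
      have h2: "(\<Sum>k<N. a k) \<le> 4 * B"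
      proof -
        have "(\<Sum>k<N. a k) \<le> (\<Sum>k<N. 2 * B * (1/2::real)^k)" using aB by (intro sum_mono) auto
        also have "\<dots> = 2 * B * (\<Sum>k<N. (1/2::real)^k)" by (simp add: sum_distrib_left)
        also have "(\<Sum>k<N. (1/2::real)^k) \<le> 2"
        proof -
          have "(\<Sum>k<N. (1/2::real)^k) \<le> (\<Sum>k. (1/2::real)^k)"
            by (rule sum_le_suminf) (auto intro: summable_geometric)
          then show ?thesis using suminf_geometric[of "1/2::real"] by simp
        qed
        then have "2 * B * (\<Sum>k<N. (1/2::real)^k) \<le> 2 * B * 2" using B0 by (intro mult_left_mono) auto
        finally show ?thesis by simp
      qed
      have h3: "(\<Sum>k<N. a k) * (e' * norm (u - y)) \<le> e / 3 * norm (u - y)"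
      proof -
        have "(\<Sum>k<N. a k) * e' \<le> (4 * B + 1) * e'" using h2 e' by (intro mult_right_mono) auto
        also have "\<dots> = e / 3" using B0 by (simp add: e'_def field_simps)
        finally have "(\<Sum>k<N. a k) * e' * norm (u - y) \<le> e / 3 * norm (u - y)"
          by (intro mult_right_mono) auto
        then show ?thesis by (simp add: algebra_simps)
      qed
      have "(\<Sum>k. (1/2)^k * (m (x k) u)^2) - (\<Sum>k. (1/2)^k * (m (x k) y)^2) - blinfun_apply p (u - y)
        \<le> 2 * (Lam^2 * norm (u - y)^2) + \<bar>\<Sum>k<N. a k * r k u\<bar> + 2 * ((2 * B * 2 * Lam * norm (u - y)) * (1/2)^N)"
        using main[of u N] unfolding c_def .
      then show ?case using elim(2) h1 h3 tailN[of "norm (u - y)"] by simp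
    qed
  qed
qed

definition Hf :: "('y \<Rightarrow> real) \<Rightarrow> ('y \<Rightarrow> 'y \<Rightarrow> real) \<Rightarrow> (nat \<Rightarrow> 'y) \<Rightarrow> nat \<Rightarrow> 'y \<Rightarrow> real" where
  "Hf F m f n u = F u + (\<Sum>k<n. (1/2)^k * (m (f k) u)^2)"

definition Sf :: "'y set \<Rightarrow> ('y \<Rightarrow> real) \<Rightarrow> ('y \<Rightarrow> 'y \<Rightarrow> real) \<Rightarrow> (nat \<Rightarrow> 'y) \<Rightarrow> nat \<Rightarrow> 'y set" where
  "Sf K F m f n = {u \<in> K. Hf F m f (Suc n) u \<le> Hf F m f n (f n)}"

definition nxt :: "'y set \<Rightarrow> ('y \<Rightarrow> real) \<Rightarrow> ('y \<Rightarrow> 'y \<Rightarrow> real) \<Rightarrow> (nat \<Rightarrow> 'y) \<Rightarrow> nat \<Rightarrow> 'y" where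
  "nxt K F m f n = (SOME p. p \<in> Sf K F m f n \<and>
      (\<forall>u\<in>Sf K F m f n. Hf F m f (Suc n) p \<le> Hf F m f (Suc n) u + (1/4)^(Suc n)))"

primrec seqs :: "'y set \<Rightarrow> ('y \<Rightarrow> real) \<Rightarrow> ('y \<Rightarrow> 'y \<Rightarrow> real) \<Rightarrow> 'y \<Rightarrow> nat \<Rightarrow> nat \<Rightarrow> 'y" where
  "seqs K F m a 0 = (\<lambda>_. a)"
| "seqs K F m a (Suc n) = (seqs K F m a n)(Suc n := nxt K F m (seqs K F m a n) n)"

lemma Hf_cong: "(\<And>k. k < n \<Longrightarrow> f k = g k) \<Longrightarrow> Hf F m f n u = Hf F m g n u"
  unfolding Hf_def by (auto intro!: sum.cong)

lemma Sf_cong: "(\<And>k. k \<le> n \<Longrightarrow> f k = g k) \<Longrightarrow> Sf K F m f n = Sf K F m g n"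
proof -
  assume h: "\<And>k. k \<le> n \<Longrightarrow> f k = g k"
  have "Hf F m f (Suc n) u = Hf F m g (Suc n) u" for u by (rule Hf_cong) (use h in auto)
  moreover have "Hf F m f n (f n) = Hf F m g n (f n)" by (rule Hf_cong) (use h in auto)
  moreover have "f n = g n" using h by simp
  ultimately show ?thesis unfolding Sf_def by simp
qed

lemma nxt_cong: "(\<And>k. k \<le> n \<Longrightarrow> f k = g k) \<Longrightarrow> nxt K F m f n = nxt K F m g n"
proof -
  assume h: "\<And>k. k \<le> n \<Longrightarrow> f k = g k"
  have "Hf F m f (Suc n) u = Hf F m g (Suc n) u" for u by (rule Hf_cong) (use h in auto)
  moreover have "Sf K F m f n = Sf K F m g n" by (rule Sf_cong) (use h in auto)
  ultimately show ?thesis unfolding nxt_def by simp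
qed

lemma seqs_stable: "k \<le> n \<Longrightarrow> seqs K F m a n k = seqs K F m a k k"
proof (induction n)
  case 0 then show ?case by simp
next
  case (Suc n)
  then show ?case by (cases "k = Suc n") auto
qed

lemma seqs_Suc: "seqs K F m a (Suc n) (Suc n) = nxt K F m (\<lambda>k. seqs K F m a k k) n"
proof -
  have "seqs K F m a (Suc n) (Suc n) = nxt K F m (seqs K F m a n) n" by simp
  also have "\<dots> = nxt K F m (\<lambda>k. seqs K F m a k k) n"
    by (rule nxt_cong) (rule seqs_stable)
  finally show ?thesis .
qed

lemma small_tail:
  assumes lam: "0 < (lam::real)" and e: "0 < e"
  shows "\<exists>N. \<forall>n\<ge>N. \<forall>t::real. t \<ge> 0 \<longrightarrow> lam^2 * t^2 \<le> (1/2)^n \<longrightarrow> t < e"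
proof -
  have "0 < (lam * e)^2" using lam e by simp
  from real_arch_pow_inv[OF this, of "1/2::real"] obtain N where N: "(1/2::real)^N < (lam * e)^2" by auto
  show ?thesis
  proof (intro exI allI impI)
    fix n :: nat and t :: real assume n: "N \<le> n" and t: "t \<ge> 0" and h: "lam^2 * t^2 \<le> (1/2)^n"
    have "(1/2::real)^n \<le> (1/2)^N" using n by (intro power_decreasing) auto
    then have "lam^2 * t^2 < (lam * e)^2" using h N by linarith
    then have "(lam * t)^2 < (lam * e)^2" by (simp add: power_mult_distrib)
    moreover have "0 \<le> lam * e" using lam e by simp
    ultimately have "lam * t < lam * e" by (rule power_less_imp_less_base)
    then show "t < e" using lam by simp
  qed
qed

lemma variational:
  fixes F :: "'y::banach \<Rightarrow> real" and m :: "'y \<Rightarrow> 'y \<Rightarrow> real"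
  assumes K: "closed K" and Fc: "continuous_on K F" and Fb: "\<And>u. u \<in> K \<Longrightarrow> Bf \<le> F u"
    and a: "a \<in> K"
    and mc: "\<And>b. continuous_on UNIV (m b)" and m0: "\<And>b. m b b = 0" and nn: "\<And>b u. 0 \<le> m b u"
    and low: "\<And>b u. lam * norm (u - b) \<le> m b u" and lam: "0 < lam"
    and Rb: "\<And>u v. u \<in> K \<Longrightarrow> v \<in> K \<Longrightarrow> m u v \<le> R"
  shows "\<exists>y\<in>K. \<exists>x. (\<forall>k. x k \<in> K) \<and> F y \<le> F a \<and>
     (\<forall>u\<in>K. F y + (\<Sum>k. (1/2)^k * (m (x k) y)^2) \<le> F u + (\<Sum>k. (1/2)^k * (m (x k) u)^2))"
proof -
  define x where "x k = seqs K F m a k k" for k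
  define H where "H = Hf F m x"
  define S where "S = Sf K F m x"
  have x0: "x 0 = a" by (simp add: x_def)
  have xS: "x (Suc n) = nxt K F m x n" for n unfolding x_def by (rule seqs_Suc)
  have HSuc: "H (Suc n) u = H n u + (1/2)^n * (m (x n) u)^2" for n u
    by (simp add: H_def Hf_def)
  have H0: "H 0 u = F u" for u by (simp add: H_def Hf_def)
  have Hlow: "H n u \<ge> F u" for n u
    unfolding H_def Hf_def by (simp add: sum_nonneg)
  have Hmono: "H n u \<le> H (Suc n) u" for n u using HSuc[of n u] by simp
  have selfS: "x n \<in> S n" if "x n \<in> K" for n
    using that HSuc[of n "x n"] m0 by (simp add: S_def Sf_def H_def)
  have step: "x (Suc n) \<in> S n \<and> (\<forall>u\<in>S n. H (Suc n) (x (Suc n)) \<le> H (Suc n) u + (1/4)^(Suc n))"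
    if xn: "x n \<in> K" for n
  proof -
    let ?V = "H (Suc n) ` S n"
    have ne: "?V \<noteq> {}" using selfS[OF xn] by auto
    have bdd: "bdd_below ?V"
    proof
      fix v assume "v \<in> ?V"
      then obtain u where "u \<in> S n" "v = H (Suc n) u" by auto
      moreover have "u \<in> K" using \<open>u \<in> S n\<close> by (simp add: S_def Sf_def)
      ultimately show "Bf \<le> v" using Fb[of u] Hlow[where n="Suc n" and u=u] by linarith
    qed
    have "Inf ?V < Inf ?V + (1/4)^(Suc n)" by simp
    then obtain p where p: "p \<in> S n" "H (Suc n) p < Inf ?V + (1/4)^(Suc n)"
      unfolding cInf_less_iff[OF ne bdd] by auto
    have "\<forall>u\<in>S n. H (Suc n) p \<le> H (Suc n) u + (1/4)^(Suc n)"
    proof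
      fix u assume "u \<in> S n"
      then have "Inf ?V \<le> H (Suc n) u" by (intro cInf_lower bdd) auto
      then show "H (Suc n) p \<le> H (Suc n) u + (1/4)^(Suc n)" using p by simp
    qed
    then have ex: "\<exists>p. p \<in> S n \<and> (\<forall>u\<in>S n. H (Suc n) p \<le> H (Suc n) u + (1/4)^(Suc n))"
      using p by blast
    show ?thesis unfolding xS nxt_def using someI_ex[OF ex] unfolding S_def H_def .
  qed
  have SK: "S n \<subseteq> K" for n by (auto simp: S_def Sf_def)
  have xK: "x n \<in> K" for n
  proof (induction n)
    case 0 then show ?case using a x0 by simp
  next
    case (Suc n) then show ?case using step[OF Suc] SK by blast
  qed
  have xSn: "x (Suc n) \<in> S n" for n using step[OF xK] by blast
  have opt: "\<And>u. u \<in> S n \<Longrightarrow> H (Suc n) (x (Suc n)) \<le> H (Suc n) u + (1/4)^(Suc n)" for n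
    using step[OF xK] by blast
  have Sdec: "S (Suc n) \<subseteq> S n" for n
  proof
    fix u assume u: "u \<in> S (Suc n)"
    have "H (Suc n) u \<le> H (Suc (Suc n)) u" by (rule Hmono)
    also have "\<dots> \<le> H (Suc n) (x (Suc n))" using u by (simp add: S_def Sf_def H_def)
    also have "\<dots> \<le> H n (x n)" using xSn[of n] by (simp add: S_def Sf_def H_def)
    finally show "u \<in> S n" using u SK by (auto simp: S_def Sf_def H_def)
  qed
  have Santi: "S j \<subseteq> S n" if "n \<le> j" for n j
    using lift_Suc_antimono_le[of S, OF Sdec that] .
  have xin: "x j \<in> S n" if "n \<le> j" for n j
    using Santi[OF that] selfS[OF xK] by blast
  have close: "lam^2 * (norm (u - x (Suc n)))^2 \<le> (1/2)^(Suc n)" if u: "u \<in> S (Suc n)" for u n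
  proof -
    have "H (Suc (Suc n)) u \<le> H (Suc n) (x (Suc n))" using u by (simp add: S_def Sf_def H_def)
    also have "\<dots> \<le> H (Suc n) u + (1/4)^(Suc n)" using opt Sdec u by blast
    finally have "(1/2)^(Suc n) * (m (x (Suc n)) u)^2 \<le> (1/4)^(Suc n)"
      using HSuc[of "Suc n" u] by simp
    then have "(1/2)^(Suc n) * (m (x (Suc n)) u)^2 \<le> (1/2)^(Suc n) * (1/2)^(Suc n)"
      by (simp add: power_mult_distrib[symmetric])
    then have m2: "(m (x (Suc n)) u)^2 \<le> (1/2)^(Suc n)" by simp
    have "(lam * norm (u - x (Suc n)))^2 \<le> (m (x (Suc n)) u)^2"
      using low[where b="x (Suc n)" and u=u] lam by (intro power_mono) auto
    then show ?thesis using m2 by (simp add: power_mult_distrib)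
  qed
  have Cx: "Cauchy x"
  proof (rule CauchyI)
    fix e :: real assume e: "0 < e"
    from small_tail[OF lam, of "e/2"] e obtain N where
      N: "\<And>n t. n \<ge> N \<Longrightarrow> t \<ge> 0 \<Longrightarrow> lam^2 * t^2 \<le> (1/2)^n \<Longrightarrow> t < e/2" by auto
    have b: "norm (x j - x (Suc N)) < e/2" if "j \<ge> Suc (Suc N)" for j
    proof -
      have "x j \<in> S (Suc N)" using xin that by simp
      from close[OF this] show ?thesis by (intro N[of "Suc N"]) auto
    qed
    have b': "norm (x j - x (Suc N)) < e/2" if "j \<ge> Suc N" for j
    proof (cases "j = Suc N")
      case True then show ?thesis using e by simp
    next
      case False then show ?thesis using that b by simp
    qed
    show "\<exists>M. \<forall>m\<ge>M. \<forall>n\<ge>M. norm (x m - x n) < e"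
    proof (intro exI allI impI)
      fix i j assume "Suc N \<le> i" "Suc N \<le> j"
      then have "norm (x i - x (Suc N)) < e/2" "norm (x j - x (Suc N)) < e/2" using b' by auto
      then show "norm (x i - x j) < e" using norm_triangle_lt[of "x i - x (Suc N)" "x (Suc N) - x j" e]
        by (simp add: norm_minus_commute)
    qed
  qed
  then obtain y where xy: "x \<longlonglongrightarrow> y" unfolding Cauchy_convergent_iff convergent_def by auto
  have yK: "y \<in> K" by (rule closed_sequentially[OF K xK xy])
  have Hc: "continuous_on K (H n)" for n
  proof -
    have "continuous_on K (\<lambda>u. F u + (\<Sum>k<n. (1/2)^k * (m (x k) u)^2))"
      by (intro continuous_intros Fc continuous_on_subset[OF mc]) auto
    then show ?thesis by (simp add: H_def Hf_def)
  qed
  have yS: "y \<in> S n" for n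
  proof -
    have "(\<lambda>j. H (Suc n) (x j)) \<longlonglongrightarrow> H (Suc n) y"
      by (rule continuous_on_tendsto_compose[OF Hc xy yK]) (simp add: xK)
    moreover have "\<exists>N. \<forall>j\<ge>N. H (Suc n) (x j) \<le> H n (x n)"
      using xin by (auto simp: S_def Sf_def H_def)
    ultimately have "H (Suc n) y \<le> H n (x n)" by (rule LIMSEQ_le_const2)
    then show ?thesis using yK by (simp add: S_def Sf_def H_def)
  qed
  have Vdec: "H (Suc n) (x (Suc n)) \<le> H n (x n)" for n
    using xSn[of n] by (simp add: S_def Sf_def H_def)
  have Vanti: "H j (x j) \<le> H n (x n)" if "n \<le> j" for n j
    using lift_Suc_antimono_le[of "\<lambda>n. H n (x n)", OF Vdec that] .
  define g where "g u = (\<Sum>k. (1/2::real)^k * (m (x k) u)^2)" for u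
  have sg: "summable (\<lambda>k. (1/2::real)^k * (m (x k) u)^2)" if "u \<in> K" for u
  proof (rule geo_bound(1))
    fix k
    have "(m (x k) u)^2 \<le> R^2" using Rb[OF xK that] nn[of "x k" u] by (intro power_mono) auto
    then show "\<bar>(1/2)^k * (m (x k) u)^2\<bar> \<le> R^2 * (1/2)^k" by (simp add: mult.commute)
  qed
  have gnn: "0 \<le> g u" if "u \<in> K" for u unfolding g_def by (rule suminf_nonneg[OF sg[OF that]]) simp
  have Hlim: "(\<lambda>n. H n u) \<longlonglongrightarrow> F u + g u" if "u \<in> K" for u
    unfolding H_def Hf_def g_def by (intro tendsto_add tendsto_const summable_LIMSEQ sg that)
  have Hle: "H n u \<le> F u + g u" if "u \<in> K" for n u
  proof -
    have "(\<Sum>k<n. (1/2::real)^k * (m (x k) u)^2) \<le> g u"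
      unfolding g_def by (rule sum_le_suminf[OF sg[OF that]]) auto
    then show ?thesis by (simp add: H_def Hf_def)
  qed
  have Gy: "F y + g y \<le> H n (x n)" for n
  proof -
    have "(\<lambda>j. H (Suc j) y) \<longlonglongrightarrow> F y + g y" using LIMSEQ_Suc[OF Hlim[OF yK]] .
    moreover have "\<exists>N. \<forall>j\<ge>N. H (Suc j) y \<le> H n (x n)"
    proof (intro exI allI impI)
      fix j assume "n \<le> j"
      have "H (Suc j) y \<le> H j (x j)" using yS[of j] by (simp add: S_def Sf_def H_def)
      also have "\<dots> \<le> H n (x n)" by (rule Vanti[OF \<open>n \<le> j\<close>])
      finally show "H (Suc j) y \<le> H n (x n)" .
    qed
    ultimately show ?thesis by (rule LIMSEQ_le_const2)
  qed
  have Fya: "F y \<le> F a" using Gy[of 0] gnn[OF yK] x0 H0 by simp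
  have final: "F y + (\<Sum>k. (1/2)^k * (m (x k) y)^2) \<le> F u + (\<Sum>k. (1/2)^k * (m (x k) u)^2)"
    if uK: "u \<in> K" for u
  proof -
    show "F y + (\<Sum>k. (1/2)^k * (m (x k) y)^2) \<le> F u + (\<Sum>k. (1/2)^k * (m (x k) u)^2)"
    proof (cases "\<forall>n. u \<in> S n")
      case True
      have "x \<longlonglongrightarrow> u"
      proof -
        have "(\<lambda>n. x (Suc n)) \<longlonglongrightarrow> u"
        proof (rule LIMSEQ_I)
          fix e :: real assume e: "0 < e"
          from small_tail[OF lam e] obtain N where
            N: "\<And>n t. n \<ge> N \<Longrightarrow> t \<ge> 0 \<Longrightarrow> lam^2 * t^2 \<le> (1/2)^n \<Longrightarrow> t < e" by auto
          show "\<exists>no. \<forall>n\<ge>no. norm (x (Suc n) - u) < e"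
          proof (intro exI allI impI)
            fix n assume "N \<le> n"
            have "lam^2 * (norm (u - x (Suc n)))^2 \<le> (1/2)^(Suc n)" using close True by blast
            then show "norm (x (Suc n) - u) < e" using N[of "Suc n"] \<open>N \<le> n\<close>
              by (simp add: norm_minus_commute)
          qed
        qed
        then show ?thesis by (rule LIMSEQ_imp_Suc)
      qed
      then have "u = y" using xy by (rule LIMSEQ_unique)
      then show ?thesis by simp
    next
      case False
      then obtain n where n: "u \<notin> S n" by blast
      then have "H n (x n) < H (Suc n) u" using uK by (auto simp: S_def Sf_def H_def)
      then have "F y + g y < F u + g u" using Gy[of n] Hle[OF uK, of "Suc n"] by linarith
      then show ?thesis by (simp add: g_def)
    qed
  qed
  show ?thesis using yK xK Fya final by blast
qed

lemma contM1:
  fixes M :: "'y::real_normed_vector \<Rightarrow> 'y \<Rightarrow> real"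
  assumes H2_diff1: "\<forall>y1 y2. y1 \<noteq> y2 \<longrightarrow> (\<lambda>y. M y y2) differentiable (at y1)"
    and H2_bounds: "\<forall>y1 y2. lam * norm (y1 - y2) \<le> M y1 y2 \<and> M y1 y2 \<le> Lam * norm (y1 - y2)"
    and lam: "0 < lam"
  shows "continuous_on S (\<lambda>u. M u z)"
proof (rule continuous_at_imp_continuous_on, intro ballI)
  fix v assume "v \<in> S"
  show "isCont (\<lambda>u. M u z) v"
  proof (cases "v = z")
    case False
    then have "(\<lambda>u. M u z) differentiable (at v)" using H2_diff1 by auto
    then show ?thesis by (rule differentiable_imp_continuous_within)
  next
    case True
    have Mzz: "M z z = 0" using H2_bounds[rule_format, of z z] by simp
    have "((\<lambda>u. M u z) \<longlongrightarrow> 0) (at z)"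
    proof (rule tendsto_sandwich[of "\<lambda>_. 0" _ _ "\<lambda>u. Lam * norm (u - z)"])
      show "\<forall>\<^sub>F u in at z. 0 \<le> M u z"
        using H2_bounds lam by (auto intro!: always_eventually order_trans[OF _ conjunct1[OF H2_bounds[rule_format]]])
      show "\<forall>\<^sub>F u in at z. M u z \<le> Lam * norm (u - z)" using H2_bounds by auto
      show "((\<lambda>_. 0::real) \<longlongrightarrow> 0) (at z)" by simp
      have "((\<lambda>u. Lam * norm (u - z)) \<longlongrightarrow> Lam * norm (z - z)) (at z)"
        by (intro tendsto_intros)
      then show "((\<lambda>u. Lam * norm (u - z)) \<longlongrightarrow> 0) (at z)" by simp
    qed
    then show ?thesis using True Mzz by (simp add: isCont_def)
  qed
qed

theorem mainTheorem1:
  fixes f :: "'x::banach \<Rightarrow> 'y::banach \<Rightarrow> real"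
    and X :: "'x set" and U :: "'y set"
    and Phi :: "'y \<Rightarrow> 'x set"
    and w :: "'y \<Rightarrow> real"
    and M :: "'y \<Rightarrow> 'y \<Rightarrow> real"
    and lam Lam C0 :: real
  assumes X_ne: "X \<noteq> {}" and U_ne: "U \<noteq> {}"
    and U_open: "open U"
    and f_cont: "continuous_on (X \<times> U) (\<lambda>(x, u). f x u)"
    and Phi_map: "\<forall>u\<in>U. Phi u \<subseteq> X"
    and w_cont: "continuous_on U w"
    and w_lbd: "locally_bounded_on U w"
    and H1: "reflexive_space TYPE('y)"
    and H2_nonneg: "\<forall>y1 y2. 0 \<le> M y1 y2"
    and H2_diff1: "\<forall>y1 y2. y1 \<noteq> y2 \<longrightarrow> (\<lambda>y. M y y2) differentiable (at y1)"
    and H2_diff2: "\<forall>y1 y2. y2 \<noteq> y1 \<longrightarrow> (\<lambda>y. M y1 y) differentiable (at y2)"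
    and H2_lam: "0 < lam" "lam \<le> 1"
    and H2_Lam: "1 \<le> Lam"
    and H2_bounds: "\<forall>y1 y2. lam * norm (y1 - y2) \<le> M y1 y2 \<and> M y1 y2 \<le> Lam * norm (y1 - y2)"
    and H2_grad1: "\<forall>y1 y2 D. ((\<lambda>y. M y y2) has_derivative D) (at y1) \<longrightarrow> lam \<le> onorm D"
    and H2_grad2: "\<forall>y1 y2 D. ((\<lambda>y. M y1 y) has_derivative D) (at y2) \<longrightarrow> onorm D \<le> Lam"
    and i_exists: "\<forall>x\<in>X. \<forall>u\<in>U. \<forall>d. norm d = 1 \<longrightarrow> dir_deriv_exists f x u d"
    and i_C0: "0 < C0"
    and i_bound: "\<forall>u\<in>U. \<forall>d. norm d = 1 \<longrightarrow>
                    (INF x\<in>optset f Phi u. ereal (dir_deriv f x u d)) > ereal (- C0)"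
    and ii: "\<forall>d. norm d = 1 \<longrightarrow> (\<forall>u\<in>U. visc_subsol_at f Phi d w u)"
  shows "locally_lipschitz_on U w"

proof -
  have lam: "0 < lam" by (rule H2_lam(1))
  have Lam0: "0 \<le> Lam" using H2_Lam by simp
  have Mnn: "0 \<le> M a b" for a b using H2_nonneg by blast
  have Mzz: "M a a = 0" for a using H2_bounds[rule_format, of a a] by simp
  have Mup: "M a b \<le> Lam * norm (a - b)" for a b using H2_bounds by blast
  have Mlow: "lam * norm (a - b) \<le> M a b" for a b using H2_bounds by blast
  have lip: "\<bar>M a u - M a v\<bar> \<le> Lam * norm (u - v)" for a u v
    by (rule lipM[OF H2_diff2 H2_bounds H2_grad2 lam])
  have mc: "continuous_on UNIV (M b)" for b
  proof (rule continuous_at_imp_continuous_on, intro ballI)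
    fix v :: 'y
    show "isCont (M b) v" unfolding isCont_def
    proof (rule tendsto_sandwich[of "\<lambda>u. M b v - Lam * norm (u - v)" _ _ "\<lambda>u. M b v + Lam * norm (u - v)"])
      show "\<forall>\<^sub>F u in at v. M b v - Lam * norm (u - v) \<le> M b u"
        using lip[of b u v for u] by (intro always_eventually allI) (smt (verit))
      show "\<forall>\<^sub>F u in at v. M b u \<le> M b v + Lam * norm (u - v)"
        using lip[of b u v for u] by (intro always_eventually allI) (smt (verit))
      have "((\<lambda>u. M b v - Lam * norm (u - v)) \<longlongrightarrow> M b v - Lam * norm (v - v)) (at v)"
        by (intro tendsto_intros)
      then show "((\<lambda>u. M b v - Lam * norm (u - v)) \<longlongrightarrow> M b v) (at v)" by simp
      have "((\<lambda>u. M b v + Lam * norm (u - v)) \<longlongrightarrow> M b v + Lam * norm (v - v)) (at v)"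
        by (intro tendsto_intros)
      then show "((\<lambda>u. M b v + Lam * norm (u - v)) \<longlongrightarrow> M b v) (at v)" by simp
    qed
  qed
  have diffD: "\<exists>D. (M a has_derivative D) (at u) \<and> onorm D \<le> Lam" if "u \<noteq> a" for a u
  proof -
    have "(\<lambda>y. M a y) differentiable (at u)" using H2_diff2 that by blast
    then obtain D where D: "((\<lambda>y. M a y) has_derivative D) (at u)" unfolding differentiable_def by blast
    then have "onorm D \<le> Lam" using H2_grad2 by blast
    with D show ?thesis by auto
  qed
  show ?thesis unfolding locally_lipschitz_on_def
  proof
    fix u0 assume u0: "u0 \<in> U"
    obtain r1 where r1: "r1 > 0" "ball u0 r1 \<subseteq> U" using U_open u0 open_contains_ball by blast
    obtain r2 W where r2: "r2 > 0" "\<forall>y\<in>U \<inter> ball u0 r2. \<bar>w y\<bar> \<le> W"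
      using w_lbd u0 unfolding locally_bounded_on_def by blast
    define r where "r = min r1 r2 / 4"
    have r: "r > 0" using r1 r2 by (simp add: r_def)
    define R where "R = 2 * r"
    have R: "R > 0" using r by (simp add: R_def)
    define W0 where "W0 = \<bar>W\<bar> + 1"
    have W0: "W0 > 0" by (simp add: W0_def)
    define A where "A = (C0 + 1 + 8 * Lam^2 * R + 2 * W0 / R) / lam"
    have Alam: "A * lam = C0 + 1 + 8 * Lam^2 * R + 2 * W0 / R" using lam by (simp add: A_def)
    have A0: "A \<ge> 0"
    proof -
      have "0 \<le> 2 * W0 / R" using W0 R by simp
      moreover have "0 \<le> 8 * Lam^2 * R" using R by simp
      ultimately have "0 \<le> C0 + 1 + 8 * Lam^2 * R + 2 * W0 / R" using i_C0 by linarith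
      then show ?thesis using lam by (simp add: A_def)
    qed
    have Kin: "cball z R \<subseteq> U \<inter> ball u0 r2" if "z \<in> ball u0 r" for z
    proof
      fix v assume "v \<in> cball z R"
      then have "dist u0 v < 3 * r" using that
        using dist_triangle[of u0 v z] by (auto simp: R_def dist_commute)
      then show "v \<in> U \<inter> ball u0 r2" using r1 r2 by (auto simp: r_def)
    qed
    have claim: "w a - w z \<le> A * Lam * norm (a - z)" if a: "a \<in> ball u0 r" and z: "z \<in> ball u0 r" for a z
    proof (rule ccontr)
      assume "\<not> ?thesis"
      then have bad: "w a - w z > A * Lam * norm (a - z)" by simp
      define K where "K = cball z R"
      have KU: "K \<subseteq> U" using Kin[OF z] by (auto simp: K_def)
      have Kb: "\<bar>w v\<bar> \<le> W" if "v \<in> K" for v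
      proof -
        have "v \<in> U \<inter> ball u0 r2" using Kin[OF z] that by (auto simp: K_def)
        then show ?thesis using r2(2) by blast
      qed
      define F where "F u = - w u + A * M u z" for u
      have Fc: "continuous_on K F" unfolding F_def
        by (intro continuous_intros continuous_on_subset[OF w_cont KU]
              contM1[OF H2_diff1 H2_bounds lam])
      have Fb: "- W \<le> F u" if "u \<in> K" for u
        using Kb[OF that] Mnn[of u z] A0 by (simp add: F_def) (smt (verit) mult_nonneg_nonneg)
      have aK: "a \<in> K" using a z by (auto simp: K_def R_def dist_commute) (smt (verit) dist_triangle)
      have RK: "M u v \<le> Lam * (2 * R)" if "u \<in> K" "v \<in> K" for u v
      proof -
        have "norm (z - u) \<le> R" "norm (z - v) \<le> R" using that by (auto simp: K_def dist_norm)
        moreover have "norm (u - v) \<le> norm (z - u) + norm (z - v)"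
          using norm_triangle_ineq[of "u - z" "z - v"] by (simp add: norm_minus_commute)
        ultimately have "norm (u - v) \<le> 2 * R" by linarith
        then have "Lam * norm (u - v) \<le> Lam * (2 * R)" using Lam0 by (intro mult_left_mono)
        then show ?thesis using Mup[of u v] by simp
      qed
      have ex: "\<exists>y\<in>K. \<exists>x. (\<forall>k. x k \<in> K) \<and> F y \<le> F a \<and>
         (\<forall>u\<in>K. F y + (\<Sum>k. (1/2)^k * (M (x k) y)^2) \<le> F u + (\<Sum>k. (1/2)^k * (M (x k) u)^2))"
      proof (rule variational[of K F "-W" a M lam "Lam * (2 * R)", OF _ Fc Fb aK mc Mzz Mnn _ lam RK])
        show "closed K" by (simp add: K_def)
        show "lam * norm (u - b) \<le> M b u" for b u using Mlow[of b u] by (simp add: norm_minus_commute)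
      qed
      then obtain y x where yK: "y \<in> K" and xK: "\<And>k. x k \<in> K" and Fya: "F y \<le> F a"
        and fin: "\<And>u. u \<in> K \<Longrightarrow> F y + (\<Sum>k. (1/2)^k * (M (x k) y)^2) \<le> F u + (\<Sum>k. (1/2)^k * (M (x k) u)^2)"
        by blast
      have Faz: "F a < F z"
      proof -
        have "A * M a z \<le> A * (Lam * norm (a - z))" using Mup[of a z] A0 by (intro mult_left_mono)
        then show ?thesis using bad Mzz[of z] by (simp add: F_def)
      qed
      have yz: "y \<noteq> z" using Fya Faz by auto
      have yR: "norm (y - z) < R"
      proof -
        have "A * (lam * norm (y - z)) \<le> A * M y z" using Mlow[of y z] A0 by (intro mult_left_mono)
        also have "\<dots> = F y + w y" by (simp add: F_def)
        also have "\<dots> < w y - w z" using Fya Faz Mzz[of z] by (simp add: F_def)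
        also have "\<dots> \<le> 2 * W0" using Kb[OF yK] Kb[of z] R by (auto simp: K_def W0_def)
        finally have h: "A * lam * norm (y - z) < 2 * W0" by (simp add: mult.assoc)
        have "2 * W0 / R \<le> A * lam" using Alam i_C0 R by simp
        then have "2 * W0 \<le> A * lam * R" using R by (simp add: divide_le_eq)
        then have "A * lam * norm (y - z) < A * lam * R" using h by linarith
        moreover have "0 \<le> A * lam" using A0 lam by simp
        ultimately show ?thesis by (simp add: mult_less_cancel_left)
      qed
      obtain rho where rho: "rho > 0" "ball y rho \<subseteq> K"
      proof
        show "R - norm (y - z) > 0" using yR by simp
        show "ball y (R - norm (y - z)) \<subseteq> K"
        proof
          fix v assume "v \<in> ball y (R - norm (y - z))"
          then have "dist y v < R - dist z y" by (simp add: dist_norm norm_minus_commute)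
          then have "dist z v \<le> R" using dist_triangle[of z v y] by linarith
          then show "v \<in> K" by (simp add: K_def)
        qed
      qed
      have By: "M (x k) y \<le> Lam * (2 * R)" for k using RK[OF xK yK] .
      obtain p where np: "norm p \<le> 4 * Lam * (Lam * (2 * R))"
        and pe: "\<And>e. e > 0 \<Longrightarrow> \<forall>\<^sub>F u in at y.
           (\<Sum>k. (1/2)^k * (M (x k) u)^2) - (\<Sum>k. (1/2)^k * (M (x k) y)^2) - blinfun_apply p (u - y)
             \<le> e * norm (u - y)"
        using smooth_sum[of M Lam x y "Lam * (2 * R)", OF lip diffD Mzz Mnn By Lam0] by blast
      have "(\<lambda>u. M u z) differentiable (at y)" using H2_diff1 yz by blast
      then obtain D1 where D1: "((\<lambda>u. M u z) has_derivative D1) (at y)" unfolding differentiable_def by blast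
      have bl: "bounded_linear D1" using D1 has_derivative_bounded_linear by blast
      have nD1: "lam \<le> norm (Blinfun D1)"
        using H2_grad1 D1 bl by (simp add: norm_blinfun.rep_eq bounded_linear_Blinfun_apply)
      define eta where "eta = A *\<^sub>R Blinfun D1 + p"
      have etaapp: "blinfun_apply eta v = A * D1 v + blinfun_apply p v" for v
        using bl by (simp add: eta_def blinfun.add_left blinfun.scaleR_left bounded_linear_Blinfun_apply)
      have "eta \<in> superjet w y"
      proof (rule superjet_intro)
        fix e :: real assume e: "e > 0"
        have e2: "e / 2 > 0" using e by simp
        have e3: "e / (2 * (A + 1)) > 0" using e A0 by simp
        have ev0: "\<forall>\<^sub>F u in at y. u \<in> K"
          unfolding eventually_at using rho by (auto simp: dist_commute intro!: exI[of _ rho])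
        from ev0 pe[OF e2] deriv_rem[OF D1 e3]
        show "\<forall>\<^sub>F u in at y. w u - w y - blinfun_apply eta (u - y) \<le> e * norm (u - y)"
        proof eventually_elim
          case (elim u)
          have f: "w u - w y \<le> A * (M u z - M y z) + ((\<Sum>k. (1/2)^k * (M (x k) u)^2) - (\<Sum>k. (1/2)^k * (M (x k) y)^2))"
            using fin[OF elim(1)] by (simp add: F_def algebra_simps)
          have "A * (M u z - M y z - D1 (u - y)) \<le> A * (e / (2 * (A + 1)) * norm (u - y))"
            using elim(3) A0 by (intro mult_left_mono) auto
          also have "\<dots> \<le> e / 2 * norm (u - y)"
          proof -
            have c: "A * (e / (2 * (A + 1))) \<le> e / 2" using A0 e by (simp add: field_simps)
            have "A * (e / (2 * (A + 1)) * norm (u - y)) = (A * (e / (2 * (A + 1)))) * norm (u - y)"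
              by (simp only: mult.assoc)
            also have "\<dots> \<le> e / 2 * norm (u - y)" by (rule mult_right_mono[OF c norm_ge_zero])
            finally show ?thesis .
          qed
          finally have t1: "A * (M u z - M y z - D1 (u - y)) \<le> e / 2 * norm (u - y)" .
          have "w u - w y - blinfun_apply eta (u - y) \<le>
            A * (M u z - M y z - D1 (u - y)) + ((\<Sum>k. (1/2)^k * (M (x k) u)^2) - (\<Sum>k. (1/2)^k * (M (x k) y)^2) - blinfun_apply p (u - y))"
            using f by (simp add: etaapp algebra_simps)
          also have "\<dots> \<le> e / 2 * norm (u - y) + e / 2 * norm (u - y)" using t1 elim(2) by linarith
          finally show ?case by simp
        qed
      qed
      then have "norm eta \<le> C0" by (rule visc_bound[OF i_bound ii i_C0 KU[THEN subsetD, OF yK]])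
      moreover have "norm eta \<ge> A * lam - 8 * Lam^2 * R"
      proof -
        have "norm (A *\<^sub>R Blinfun D1) = A * norm (Blinfun D1)" using A0 by simp
        also have "\<dots> \<ge> A * lam" using nD1 A0 by (simp add: mult_left_mono)
        finally have "A * lam \<le> norm (A *\<^sub>R Blinfun D1)" .
        moreover have "norm (A *\<^sub>R Blinfun D1) \<le> norm eta + norm p"
          unfolding eta_def using norm_triangle_ineq4[of "A *\<^sub>R Blinfun D1 + p" p] by simp
        moreover have "norm p \<le> 8 * Lam^2 * R" using np by (simp add: power2_eq_square algebra_simps)
        ultimately show ?thesis by linarith
      qed
      moreover have "A * lam - 8 * Lam^2 * R > C0"
      proof -
        have "0 < 2 * W0 / R" using W0 R by simp
        then show ?thesis using Alam by linarith
      qed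
      ultimately show False by linarith
    qed
    show "\<exists>r>0. \<exists>L. \<forall>y\<in>U \<inter> ball u0 r. \<forall>z\<in>U \<inter> ball u0 r. \<bar>w y - w z\<bar> \<le> L * dist y z"
    proof (intro exI conjI ballI)
      show "r > 0" by (rule r)
      fix a z assume "a \<in> U \<inter> ball u0 r" "z \<in> U \<inter> ball u0 r"
      then have "w a - w z \<le> A * Lam * norm (a - z)" "w z - w a \<le> A * Lam * norm (z - a)"
        using claim by auto
      then show "\<bar>w a - w z\<bar> \<le> A * Lam * dist a z" by (simp add: dist_norm norm_minus_commute)
    qed
  qed
qed

end
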